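(* Let $\mathfrak{g}$ be a complex filiform Lie algebra of nilpotency class $c\ge 5$. Then $\mathfrak{g}$ does not admit a periodic prederivation.
   Context: A nilpotent Lie algebra of dimension $n$ is filiform if its nilpotency class is $n-1$. A linear map $P:\mathfrak{g}\to\mathfrak{g}$ is a prederivation if $P([x,[y,z]])=[P(x),[y,z]]+[x,[P(y),z]]+[x,[y,P(z)]]$ for all $x,y,z\in\mathfrak{g}$; it is periodic if $P^m=\mathrm{id}$ for some integer $m\ge 1$. *)

theory Defs
  imports Complex_Main
begin

definition complex_lie_algebra ::
  "(complex \<Rightarrow> 'v::ab_group_add \<Rightarrow> 'v) \<Rightarrow> ('v \<Rightarrow> 'v \<Rightarrow> 'v) \<Rightarrow> bool" where
  "complex_lie_algebra sc br \<longleftrightarrow>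
     vector_space sc \<and>
     (\<forall>x. Vector_Spaces.linear sc sc (br x)) \<and>
     (\<forall>y. Vector_Spaces.linear sc sc (\<lambda>x. br x y)) \<and>
     (\<forall>x. br x x = 0) \<and>
     (\<forall>x y z. br x (br y z) + br y (br z x) + br z (br x y) = 0)"

definition finite_dim :: "(complex \<Rightarrow> 'v::ab_group_add \<Rightarrow> 'v) \<Rightarrow> bool" where
  "finite_dim sc \<longleftrightarrow> (\<exists>B. finite B \<and> module.span sc B = UNIV)"

text \<open>Lower central series: lcs 0 = g (= g^1), lcs (k+1) = [g, lcs k] (= g^(k+2)).\<close>

fun lcs :: "(complex \<Rightarrow> 'v::ab_group_add \<Rightarrow> 'v) \<Rightarrow> ('v \<Rightarrow> 'v \<Rightarrow> 'v) \<Rightarrow> nat \<Rightarrow> 'v set" where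
  "lcs sc br 0 = UNIV"
| "lcs sc br (Suc k) = module.span sc {br x y | x y. y \<in> lcs sc br k}"

definition nilpotency_class ::
  "(complex \<Rightarrow> 'v::ab_group_add \<Rightarrow> 'v) \<Rightarrow> ('v \<Rightarrow> 'v \<Rightarrow> 'v) \<Rightarrow> nat \<Rightarrow> bool" where
  "nilpotency_class sc br c \<longleftrightarrow> c \<ge> 1 \<and> lcs sc br c = {0} \<and> lcs sc br (c - 1) \<noteq> {0}"

definition filiform ::
  "(complex \<Rightarrow> 'v::ab_group_add \<Rightarrow> 'v) \<Rightarrow> ('v \<Rightarrow> 'v \<Rightarrow> 'v) \<Rightarrow> bool" where
  "filiform sc br \<longleftrightarrow> nilpotency_class sc br (vector_space.dim sc (UNIV :: 'v set) - 1)"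

definition prederivation ::
  "(complex \<Rightarrow> 'v::ab_group_add \<Rightarrow> 'v) \<Rightarrow> ('v \<Rightarrow> 'v \<Rightarrow> 'v) \<Rightarrow> ('v \<Rightarrow> 'v) \<Rightarrow> bool" where
  "prederivation sc br P \<longleftrightarrow> Vector_Spaces.linear sc sc P \<and>
     (\<forall>x y z. P (br x (br y z)) = br (P x) (br y z) + br x (br (P y) z) + br x (br y (P z)))"

definition periodic :: "('v \<Rightarrow> 'v) \<Rightarrow> bool" where
  "periodic P \<longleftrightarrow> (\<exists>m::nat. m \<ge> 1 \<and> P ^^ m = id)"

end

theory Submission
  imports Defs
begin

locale lieA = vector_space sc
  for sc :: "complex \<Rightarrow> 'v::ab_group_add \<Rightarrow> 'v" +
  fixes br :: "'v \<Rightarrow> 'v \<Rightarrow> 'v"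
  assumes lin1: "\<And>x. Vector_Spaces.linear sc sc (br x)"
    and lin2: "\<And>y. Vector_Spaces.linear sc sc (\<lambda>x. br x y)"
    and alt: "\<And>x. br x x = 0"
    and jac: "\<And>x y z. br x (br y z) + br y (br z x) + br z (br x y) = 0"
begin

lemma mh1: "module_hom sc sc (br x)"
  by (rule module_hom_linearI[OF lin1])
lemma mh2: "module_hom sc sc (\<lambda>x. br x y)"
  by (rule module_hom_linearI[OF lin2])

lemma br_add_r: "br x (y + z) = br x y + br x z"
  using module_hom.add[OF mh1] .
lemma br_add_l: "br (x + y) z = br x z + br y z"
  by (rule module_hom.add[OF mh2])
lemma br_scale_r: "br x (sc a y) = sc a (br x y)"
  using module_hom.scale[OF mh1] .
lemma br_scale_l: "br (sc a x) y = sc a (br x y)"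
  by (rule module_hom.scale[OF mh2])
lemma br_0_r [simp]: "br x 0 = 0"
  using module_hom.zero[OF mh1] .
lemma br_0_l [simp]: "br 0 y = 0"
  by (rule module_hom.zero[OF mh2])
lemma br_neg_r: "br x (- y) = - br x y"
  using module_hom.neg[OF mh1] .
lemma br_neg_l: "br (- x) y = - br x y"
  by (rule module_hom.neg[OF mh2])
lemma br_diff_r: "br x (y - z) = br x y - br x z"
  using module_hom.diff[OF mh1] .
lemma br_diff_l: "br (x - y) z = br x z - br y z"
  by (rule module_hom.diff[OF mh2])
lemma br_sum_r: "br x (sum f A) = (\<Sum>a\<in>A. br x (f a))"
  using module_hom.sum[OF mh1] .
lemma br_sum_l: "br (sum f A) y = (\<Sum>a\<in>A. br (f a) y)"
  by (rule module_hom.sum[OF mh2])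

lemmas br_simps = br_add_r br_add_l br_scale_r br_scale_l br_neg_r br_neg_l br_diff_r br_diff_l

lemma antisym: "br y x = - br x y"
proof -
  have "br (x + y) (x + y) = 0" by (rule alt)
  hence "br x x + br x y + (br y x + br y y) = 0" by (simp add: br_add_l br_add_r add_ac)
  hence "br x y + br y x = 0" by (simp add: alt)
  thus ?thesis by (simp add: eq_neg_iff_add_eq_0 add.commute)
qed

lemma jac2: "br (br x y) z = br x (br y z) - br y (br x z)"
proof -
  have "br y (br z x) = - br y (br x z)" by (subst antisym[of z x]) (simp add: br_neg_r)
  moreover have "br z (br x y) = - br (br x y) z" by (rule antisym)
  ultimately show ?thesis using jac[of x y z] by (simp add: algebra_simps)
qed

abbreviation L where "L k \<equiv> lcs sc br k"

lemma L_0: "L 0 = UNIV" by simp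
lemma L_Suc: "L (Suc k) = span {br x y | x y. y \<in> L k}" by simp

declare lcs.simps[simp del]

lemma span_L [simp]: "span (L k) = L k"
  by (cases k) (auto simp: L_0 L_Suc)

lemma L_sub: "subspace (L k)"
  by (cases k) (auto simp: L_0 L_Suc)

lemma br_L: "y \<in> L k \<Longrightarrow> br x y \<in> L (Suc k)"
  unfolding L_Suc by (auto intro: span_base)

lemma br_L': "x \<in> L k \<Longrightarrow> br x y \<in> L (Suc k)"
proof -
  assume "x \<in> L k"
  hence "br y x \<in> L (Suc k)" by (rule br_L)
  hence "- br y x \<in> L (Suc k)" by (rule subspace_neg[OF L_sub])
  thus ?thesis by (simp add: antisym[of x y])
qed

lemma L_mono_Suc: "L (Suc k) \<subseteq> L k"
proof (induction k)
  case 0 then show ?case by (simp add: L_0)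
next
  case (Suc k)
  have "{br x y | x y. y \<in> L (Suc k)} \<subseteq> L (Suc k)"
    using Suc br_L by blast
  then have "span {br x y | x y. y \<in> L (Suc k)} \<subseteq> L (Suc k)"
    by (rule span_minimal[OF _ L_sub])
  then show ?case by (subst L_Suc)
qed

lemma L_anti: "j \<le> k \<Longrightarrow> L k \<subseteq> L j"
  by (induction k rule: dec_induct) (use L_mono_Suc in auto)

lemma L_bracket: "a \<in> L i \<Longrightarrow> b \<in> L j \<Longrightarrow> br a b \<in> L (i + j + 1)"
proof (induction i arbitrary: a j b)
  case 0 then show ?case using br_L by simp
next
  case (Suc i)
  let ?S = "{a. \<forall>j b. b \<in> L j \<longrightarrow> br a b \<in> L (Suc i + j + 1)}"
  have sub: "subspace ?S"
  proof (rule subspaceI)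
    show "0 \<in> ?S" using subspace_0[OF L_sub] by auto
    show "x + y \<in> ?S" if "x \<in> ?S" "y \<in> ?S" for x y
      using that by (auto simp: br_add_l intro!: subspace_add[OF L_sub])
    show "sc a x \<in> ?S" if "x \<in> ?S" for a x
      using that by (auto simp: br_scale_l intro!: subspace_scale[OF L_sub])
  qed
  have gen: "x \<in> ?S" if "x \<in> {br p q | p q. q \<in> L i}" for x
  proof -
    from that obtain p q where x: "x = br p q" and q: "q \<in> L i" by blast
    show ?thesis
    proof (intro CollectI allI impI)
      fix j b assume b: "b \<in> L j"
      have 1: "br p (br q b) \<in> L (Suc i + j + 1)"
        using br_L[OF Suc.IH[OF q b]] by simp
      have "br p b \<in> L (Suc j)" using br_L[OF b] .
      hence 2: "br q (br p b) \<in> L (Suc i + j + 1)"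
        using Suc.IH[OF q] by fastforce
      show "br x b \<in> L (Suc i + j + 1)"
        unfolding x jac2 using 1 2 by (rule subspace_diff[OF L_sub])
    qed
  qed
  have "a \<in> span {br p q | p q. q \<in> L i}" using Suc.prems(1) by (simp only: L_Suc)
  hence "a \<in> ?S"
    by (rule span_subspace_induct[OF _ sub gen])
  then show ?case using Suc.prems(2) by blast
qed

lemma L_eq_stable:
  assumes eq: "L (Suc k) = L k" and kj: "k \<le> j" shows "L j = L k"
  using kj
proof (induction j rule: dec_induct)
  case base then show ?case by simp
next
  case (step j)
  have "L (Suc j) = span {br x y | x y. y \<in> L j}" by (rule L_Suc)
  also have "\<dots> = span {br x y | x y. y \<in> L k}" using step by simp
  also have "\<dots> = L (Suc k)" by (rule L_Suc[symmetric])
  finally show ?case using eq by simp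
qed

lemma class_unique:
  assumes "nilpotency_class sc br c1" "nilpotency_class sc br c2"
  shows "c1 = c2"
proof (rule ccontr)
  assume ne: "c1 \<noteq> c2"
  have key: "False" if a: "nilpotency_class sc br a" and b: "nilpotency_class sc br b" and lt: "a < b" for a b
  proof -
    have "L (b - 1) \<subseteq> L a" using lt by (intro L_anti) auto
    thus False using a b unfolding nilpotency_class_def using subspace_0[OF L_sub, of "b - 1"] by auto
  qed
  show False using ne key assms by (metis linorder_neqE_nat)
qed

end


locale lieF = lieA sc br + finite_dimensional_vector_space sc Basis
  for sc :: "complex \<Rightarrow> 'v::ab_group_add \<Rightarrow> 'v" and br and Basis :: "'v set" +
  fixes c :: nat
  assumes cls: "nilpotency_class sc br c" and cdim: "c = dim UNIV - 1" and c5: "5 \<le> c"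
begin

lemma Lc: "L c = {0}" using cls by (simp add: nilpotency_class_def)
lemma Lc1: "L (c - 1) \<noteq> {0}" using cls by (simp add: nilpotency_class_def)
lemma dimU: "dim UNIV = Suc c" using cdim c5 by simp

lemma L_strict: "k < c \<Longrightarrow> L (Suc k) \<noteq> L k"
proof
  assume k: "k < c" and eq: "L (Suc k) = L k"
  have "L c = L k" by (rule L_eq_stable[OF eq]) (use k in simp)
  moreover have "L (c - 1) = L k" by (rule L_eq_stable[OF eq]) (use k in simp)
  ultimately show False using Lc Lc1 by simp
qed

lemma L_psub: "k < c \<Longrightarrow> L (Suc k) \<subset> L k"
  using L_strict L_mono_Suc by blast

lemma dimL_lt: "k < c \<Longrightarrow> dim (L (Suc k)) < dim (L k)"
  using dim_psubset[of "L (Suc k)" "L k"] L_psub by (simp add: L_sub)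

lemma dim_Lc: "dim (L c) = 0" by (simp add: Lc)
lemma dim_L0: "dim (L 0) = Suc c" unfolding L_0 by (rule dimU)

lemma dim_lower: "t \<le> c \<Longrightarrow> t \<le> dim (L (c - t))"
proof (induction t)
  case 0 then show ?case by simp
next
  case (Suc t)
  have "c - Suc t < c" using Suc.prems by simp
  hence "dim (L (Suc (c - Suc t))) < dim (L (c - Suc t))" by (rule dimL_lt)
  moreover have "Suc (c - Suc t) = c - t" using Suc.prems by simp
  ultimately show ?case using Suc by simp
qed

lemma full_iff: "span S = UNIV \<longleftrightarrow> dim S = Suc c"
proof -
  have "dimension = Suc c" by (metis dim_UNIV dimU dimension_def)
  thus ?thesis using dim_eq_full[of S] by simp
qed

lemma dim_ins: "x \<notin> L k \<Longrightarrow> dim (insert x (L k)) = dim (L k) + 1"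
  using dim_insert[of x "L k"] by (simp add: L_sub)

lemma dim_L1: "dim (L 1) \<le> c - 1"
proof (rule ccontr)
  assume "\<not> dim (L 1) \<le> c - 1"
  moreover have "dim (L 1) < Suc c" using dimL_lt[of 0] c5 dim_L0 by simp
  ultimately have d: "dim (L 1) = c" by simp
  have "L 1 \<noteq> UNIV" using L_strict[of 0] c5 by (simp add: L_0)
  then obtain x where x: "x \<notin> L 1" by blast
  have full: "span (insert x (L 1)) = UNIV"
    using full_iff dim_ins[OF x] d by simp
  have gen: "br a b \<in> L 2" for a b
  proof -
    have "a \<in> span (insert x (L 1))" using full by simp
    then obtain t where t: "a - sc t x \<in> L 1"
      using span_breakdown_eq[of a x "L 1"] by (auto simp: L_sub)
    have "b \<in> span (insert x (L 1))" using full by simp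
    then obtain s where s: "b - sc s x \<in> L 1"
      using span_breakdown_eq[of b x "L 1"] by (auto simp: L_sub)
    define a' where "a' = a - sc t x"
    define b' where "b' = b - sc s x"
    have ea: "a = a' + sc t x" and eb: "b = b' + sc s x" by (simp_all add: a'_def b'_def)
    have "br a b = br a' b + sc t (br x b')"
      unfolding ea eb by (simp add: br_simps alt)
    moreover have "br a' b \<in> L 2" using br_L'[of a' 1 b] t a'_def by (simp add: numeral_2_eq_2)
    moreover have "br x b' \<in> L 2" using br_L[of b' 1 x] s b'_def by (simp add: numeral_2_eq_2)
    ultimately show ?thesis by (simp add: subspace_add[OF L_sub] subspace_scale[OF L_sub])
  qed
  have "L 1 \<subseteq> L 2"
    unfolding One_nat_def L_Suc[of 0]
    by (rule span_minimal) (use gen L_sub in \<open>auto simp: numeral_2_eq_2\<close>)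
  hence "L 2 = L 1" using L_mono_Suc[of 1] by (simp add: numeral_2_eq_2)
  thus False using L_strict[of 1] c5 by (simp add: numeral_2_eq_2)
qed

lemma dim_upper: "1 \<le> k \<Longrightarrow> k \<le> c \<Longrightarrow> dim (L k) + (k - 1) \<le> dim (L 1)"
proof (induction k rule: dec_induct)
  case base then show ?case by simp
next
  case (step k)
  have "dim (L (Suc k)) < dim (L k)" using step by (intro dimL_lt) simp
  then show ?case using step by simp
qed

lemma dimL: "1 \<le> k \<Longrightarrow> k \<le> c \<Longrightarrow> dim (L k) = c - k"
proof -
  assume k: "1 \<le> k" "k \<le> c"
  have "c - k \<le> dim (L (c - (c - k)))" by (rule dim_lower) simp
  moreover have "c - (c - k) = k" using k by simp
  moreover have "dim (L k) + (k - 1) \<le> dim (L 1)" using dim_upper k by simp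
  ultimately show ?thesis using dim_L1 k by simp
qed

lemma one_dim:
  assumes k: "1 \<le> k" "k < c" and v: "v \<in> L k" "v \<notin> L (Suc k)"
  shows "span (insert v (L (Suc k))) = L k"
proof (rule subspace_dim_equal)
  show "subspace (span (insert v (L (Suc k))))" by simp
  show "subspace (L k)" by (rule L_sub)
  show "span (insert v (L (Suc k))) \<subseteq> L k"
    using v L_mono_Suc[of k] by (intro span_minimal L_sub) auto
  have "dim (span (insert v (L (Suc k)))) = dim (L (Suc k)) + 1"
    using dim_ins[OF v(2)] by simp
  also have "\<dots> = dim (L k)" using dimL[of k] dimL[of "Suc k"] k by simp
  finally show "dim (L k) \<le> dim (span (insert v (L (Suc k))))" by simp
qed

lemma one_dimE:
  assumes k: "1 \<le> k" "k < c" and v: "v \<in> L k" "v \<notin> L (Suc k)" and a: "a \<in> L k"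
  obtains t where "a - sc t v \<in> L (Suc k)"
proof -
  have "a \<in> span (insert v (L (Suc k)))" using one_dim[OF k v] a by simp
  then show ?thesis using that span_breakdown_eq[of a v "L (Suc k)"] by (auto simp: L_sub)
qed

lemma two_dim:
  assumes x: "x \<notin> L 1" and y: "y \<notin> span (insert x (L 1))"
  shows "span (insert y (insert x (L 1))) = UNIV"
proof -
  have "dim (insert y (insert x (L 1))) = dim (insert x (L 1)) + 1"
    using dim_insert[of y "insert x (L 1)"] y by simp
  also have "\<dots> = dim (L 1) + 2" using dim_ins[OF x] by simp
  also have "\<dots> = Suc c" using dimL[of 1] c5 by simp
  finally show ?thesis using full_iff by simp
qed

lemma two_dimE:
  assumes "span (insert y (insert x (L 1))) = UNIV"
  obtains s t where "a - sc s x - sc t y \<in> L 1"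
proof -
  have "a \<in> span (insert y (insert x (L 1)))" using assms by simp
  then obtain t where "a - sc t y \<in> span (insert x (L 1))"
    using span_breakdown_eq by blast
  then obtain s where "a - sc t y - sc s x \<in> span (L 1)"
    using span_breakdown_eq by blast
  then have "a - sc s x - sc t y \<in> L 1" by (simp add: L_sub algebra_simps)
  then show ?thesis using that by blast
qed

lemma not_full: "span (insert x (L 1)) \<noteq> UNIV"
proof -
  have "dim (insert x (L 1)) \<le> dim (L 1) + 1"
    using dim_insert[of x "L 1"] by simp
  also have "\<dots> \<le> c" using dim_L1 c5 by simp
  finally show ?thesis using full_iff by simp
qed

lemma two_br:
  assumes full: "span (insert y (insert x (L 1))) = UNIV"
  shows "br x y \<notin> L 2"
proof
  assume xy: "br x y \<in> L 2"
  have yx: "br y x \<in> L 2" using subspace_neg[OF L_sub xy] by (simp add: antisym[of x y])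
  have gen: "br a b \<in> L 2" for a b
  proof -
    obtain s t where st: "a - sc s x - sc t y \<in> L 1" using two_dimE[OF full] .
    obtain s' t' where st': "b - sc s' x - sc t' y \<in> L 1" using two_dimE[OF full] .
    define a' where "a' = a - sc s x - sc t y"
    define b' where "b' = b - sc s' x - sc t' y"
    have ea: "a = a' + (sc s x + sc t y)" and eb: "b = b' + (sc s' x + sc t' y)"
      by (simp_all add: a'_def b'_def algebra_simps)
    have e: "br a b = br a' b + br (sc s x + sc t y) b' +
        (sc s (sc s' (br x x)) + sc s (sc t' (br x y)) + (sc t (sc s' (br y x)) + sc t (sc t' (br y y))))"
      unfolding ea eb by (simp add: br_simps add_ac scale_right_distrib mult.commute)
    have 1: "br a' b \<in> L 2" using br_L'[of a' 1 b] st a'_def by (simp add: numeral_2_eq_2)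
    have 2: "br (sc s x + sc t y) b' \<in> L 2" using br_L[of b' 1] st' b'_def by (simp add: numeral_2_eq_2)
    show ?thesis unfolding e using 1 2 xy yx
      by (simp add: alt subspace_add[OF L_sub] subspace_scale[OF L_sub])
  qed
  have "L 1 \<subseteq> L 2"
    unfolding One_nat_def L_Suc[of 0]
    by (rule span_minimal) (use gen L_sub in \<open>auto simp: numeral_2_eq_2\<close>)
  hence "L 2 = L 1" using L_mono_Suc[of 1] by (simp add: numeral_2_eq_2)
  thus False using L_strict[of 1] c5 by (simp add: numeral_2_eq_2)
qed


definition Nk :: "nat \<Rightarrow> 'v set" where "Nk k = {z. \<forall>a\<in>L k. br z a \<in> L (k + 2)}"

lemma Nk_sub: "subspace (Nk k)"
proof (rule subspaceI)
  show "0 \<in> Nk k" unfolding Nk_def using subspace_0[OF L_sub] by auto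
  show "x + y \<in> Nk k" if "x \<in> Nk k" "y \<in> Nk k" for x y
    using that unfolding Nk_def by (auto simp: br_add_l intro!: subspace_add[OF L_sub])
  show "sc a x \<in> Nk k" if "x \<in> Nk k" for a x
    using that unfolding Nk_def by (auto simp: br_scale_l intro!: subspace_scale[OF L_sub])
qed

lemma L1_Nk: "L 1 \<subseteq> Nk k"
proof
  fix z assume z: "z \<in> L 1"
  show "z \<in> Nk k" unfolding Nk_def
  proof (intro CollectI ballI)
    fix a assume "a \<in> L k"
    from L_bracket[OF z this] show "br z a \<in> L (k + 2)" by (simp add: add.commute)
  qed
qed

lemma Nk_proper: "Suc k < c \<Longrightarrow> Nk k \<noteq> UNIV"
proof
  assume k: "Suc k < c" and U: "Nk k = UNIV"
  have "L (Suc k) \<subseteq> L (k + 2)"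
    unfolding L_Suc[of k]
  proof (rule span_minimal[OF _ L_sub])
    show "{br x y |x y. y \<in> L k} \<subseteq> L (k + 2)"
      using U unfolding Nk_def by blast
  qed
  hence "L (Suc (Suc k)) = L (Suc k)" using L_mono_Suc[of "Suc k"] by simp
  thus False using L_strict[OF k] by simp
qed

lemma nonN:
  assumes k: "1 \<le> k" "Suc k < c" and z: "z \<notin> Nk k" and v: "v \<in> L k" "v \<notin> L (Suc k)"
  shows "br z v \<notin> L (k + 2)"
proof
  assume zv: "br z v \<in> L (k + 2)"
  have "z \<in> Nk k" unfolding Nk_def
  proof (intro CollectI ballI)
    fix a assume a: "a \<in> L k"
    obtain t where t: "a - sc t v \<in> L (Suc k)" using one_dimE[OF k(1) _ v a] k by auto
    have e: "br z a = br z (a - sc t v) + sc t (br z v)" by (simp add: br_simps)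
    have "br z (a - sc t v) \<in> L (k + 2)" using br_L[OF t] by simp
    thus "br z a \<in> L (k + 2)" unfolding e
      using zv by (simp add: subspace_add[OF L_sub] subspace_scale[OF L_sub])
  qed
  thus False using z by simp
qed

lemma N1_N2: "Nk 1 \<subseteq> Nk 2"
proof
  fix z assume z: "z \<in> Nk 1"
  obtain x0 where x0: "x0 \<notin> Nk 1" using Nk_proper[of 1] c5 by auto
  show "z \<in> Nk 2"
  proof (cases "z \<in> span (insert x0 (L 1))")
    case True
    then obtain t where t: "z - sc t x0 \<in> L 1" using span_breakdown_eq[of z x0 "L 1"] by auto
    have "t = 0"
    proof (rule ccontr)
      assume t0: "t \<noteq> 0"
      have zt: "z - sc t x0 \<in> Nk 1" using t L1_Nk by auto
      have "z - (z - sc t x0) \<in> Nk 1" by (rule subspace_diff[OF Nk_sub z zt])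
      hence "sc t x0 \<in> Nk 1" by simp
      hence "sc (inverse t) (sc t x0) \<in> Nk 1" by (rule subspace_scale[OF Nk_sub])
      hence "x0 \<in> Nk 1" using t0 by simp
      thus False using x0 by simp
    qed
    hence "z \<in> L 1" using t by simp
    thus ?thesis using L1_Nk by auto
  next
    case False
    have x0L: "x0 \<notin> L 1" using L1_Nk x0 by auto
    have full: "span (insert z (insert x0 (L 1))) = UNIV" by (rule two_dim[OF x0L False])
    define w0 where "w0 = br x0 z"
    have w0: "w0 \<notin> L 2" using two_br[OF full] w0_def by simp
    have w0L: "w0 \<in> L 1" using br_L[of z 0 x0] w0_def by (simp add: L_0)
    define v0 where "v0 = br x0 w0"
    have v0n: "v0 \<notin> L 3" using nonN[of 1 x0 w0] c5 x0 w0L w0 v0_def by (simp add: eval_nat_numeral)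
    have v0L: "v0 \<in> L 2" using br_L[OF w0L] v0_def by (simp add: numeral_2_eq_2)
    show "z \<in> Nk 2" unfolding Nk_def
    proof (intro CollectI ballI)
      fix a assume a: "a \<in> L 2"
      obtain t where t: "a - sc t v0 \<in> L 3"
        using one_dimE[of 2 v0 a] c5 v0L v0n a by (auto simp: numeral_3_eq_3)
      have e: "br z a = br z (a - sc t v0) + sc t (br z v0)" by (simp add: br_simps)
      have 1: "br z (a - sc t v0) \<in> L 4" using br_L[OF t] by (simp add: numeral_3_eq_3 eval_nat_numeral)
      have e2: "br z v0 = br (br z x0) w0 + br x0 (br z w0)" by (simp add: jac2 v0_def)
      have "br z x0 = - w0" by (simp add: w0_def antisym[of x0 z])
      hence e3: "br (br z x0) w0 = 0" by (simp add: br_neg_l alt)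
      have "br z w0 \<in> L 3" using z w0L unfolding Nk_def by (simp add: eval_nat_numeral)
      hence "br x0 (br z w0) \<in> L 4" using br_L by (simp add: eval_nat_numeral)
      hence "br z v0 \<in> L 4" using e2 e3 by simp
      thus "br z a \<in> L (2 + 2)" unfolding e using 1
        by (simp add: subspace_add[OF L_sub] subspace_scale[OF L_sub])
    qed
  qed
qed
end


lemma AP_lemma:
  fixes a d :: complex
  assumes "norm a = 1" "norm (a + d) = 1" "norm (a + 2 * d) = 1"
  shows "d = 0"
proof -
  have n1: "(Re z)^2 + (Im z)^2 = 1" if "norm z = 1" for z :: complex
    using that by (simp add: cmod_def)
  define p where "p = Re a" define q where "q = Im a"
  define x where "x = Re d" define y where "y = Im d"
  have e1: "p^2 + q^2 = 1" using n1[OF assms(1)] p_def q_def by simp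
  have e2: "(p+x)^2 + (q+y)^2 = 1" using n1[OF assms(2)] p_def q_def x_def y_def by simp
  have e3: "(p+2*x)^2 + (q+2*y)^2 = 1" using n1[OF assms(3)] p_def q_def x_def y_def by simp
  have h: "(p+2*x)^2 + (q+2*y)^2 - 2*((p+x)^2+(q+y)^2) + (p^2+q^2) = 2*(x^2+y^2)"
    by (simp add: power2_eq_square algebra_simps)
  have "2*(x^2+y^2) = 0" using h unfolding e1 e2 e3 by simp
  hence "x^2 + y^2 = 0" by (simp only: mult_eq_0_iff) simp
  hence "x = 0" "y = 0" by (simp_all add: sum_power2_eq_zero_iff)
  thus "d = 0" using x_def y_def by (simp add: complex_eq_iff)
qed

locale lieP = lieF sc br Basis c
  for sc :: "complex \<Rightarrow> 'v::ab_group_add \<Rightarrow> 'v" and br and Basis :: "'v set" and c :: nat +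
  fixes P :: "'v \<Rightarrow> 'v" and m :: nat
  assumes Plin: "Vector_Spaces.linear sc sc P"
    and pre: "\<And>x y z. P (br x (br y z)) = br (P x) (br y z) + br x (br (P y) z) + br x (br y (P z))"
    and m_pos: "1 \<le> m" and Pm: "P ^^ m = id"
begin

lemma mhP: "module_hom sc sc P" by (rule module_hom_linearI[OF Plin])

lemma mod_self: "module sc" by (simp add: module_iff_vector_space vector_space_axioms)

lemma mhPk: "module_hom sc sc (P ^^ k)"
proof (induction k)
  case 0 then show ?case using module_hom_linearI[OF linear_id] by (simp add: id_def)
next
  case (Suc k)
  show ?case unfolding funpow.simps(2) by (rule module_hom_compose[OF Suc mhP])
qed

lemma Pk_scale: "(P ^^ k) (sc a u) = sc a ((P ^^ k) u)"
  by (rule module_hom.scale[OF mhPk])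
lemma P_scale: "P (sc a u) = sc a (P u)"
  by (rule module_hom.scale[OF mhP])
lemma P_sum: "P (sum f A) = (\<Sum>x\<in>A. P (f x))"
  by (rule module_hom.sum[OF mhP])

definition ev :: "complex \<Rightarrow> 'v \<Rightarrow> bool" where "ev \<mu> u \<longleftrightarrow> P u = sc \<mu> u"

lemma ev_pow: "ev \<mu> u \<Longrightarrow> (P ^^ k) u = sc (\<mu> ^ k) u"
proof (induction k)
  case 0 then show ?case by simp
next
  case (Suc k)
  have "(P ^^ Suc k) u = P ((P ^^ k) u)" by simp
  also have "\<dots> = sc (\<mu> ^ k) (P u)" using Suc by (simp add: P_scale)
  also have "\<dots> = sc (\<mu> ^ Suc k) u" using Suc.prems by (simp add: ev_def mult.commute)
  finally show ?case .
qed

lemma ev_root: "ev \<mu> u \<Longrightarrow> u \<noteq> 0 \<Longrightarrow> \<mu> ^ m = 1"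
proof -
  assume e: "ev \<mu> u" and u: "u \<noteq> 0"
  have "sc (\<mu> ^ m) u = u" using ev_pow[OF e, of m] Pm by simp
  hence "sc (\<mu> ^ m - 1) u = 0" by (simp add: scale_left_diff_distrib)
  thus ?thesis using u by simp
qed

lemma ev_norm: "ev \<mu> u \<Longrightarrow> u \<noteq> 0 \<Longrightarrow> norm \<mu> = 1"
proof -
  assume e: "ev \<mu> u" and u: "u \<noteq> 0"
  have "norm \<mu> ^ m = 1 ^ m" using ev_root[OF e u] by (simp add: norm_power[symmetric])
  from this show ?thesis by (rule power_eq_imp_eq_base) (use m_pos in auto)
qed

lemma ev_diff: "ev \<mu> a \<Longrightarrow> ev \<mu> b \<Longrightarrow> ev \<mu> (a - b)"
  by (simp add: ev_def module_hom.diff[OF mhP] scale_right_diff_distrib)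

lemma ev_br3: "ev a x \<Longrightarrow> ev b y \<Longrightarrow> ev d z \<Longrightarrow> ev (a + b + d) (br x (br y z))"
  by (simp add: ev_def pre br_simps scale_left_distrib)

lemma ev_0: "ev \<mu> 0" by (simp add: ev_def module_hom.zero[OF mhP])

definition om :: "nat \<Rightarrow> complex" where "om j = cis (2 * pi * real j / real m)"

lemma om_bij: "bij_betw om {..<m} {z. z ^ m = 1}"
  unfolding om_def[abs_def] using bij_betw_roots_unity[of m] m_pos by simp

lemma om_root: "j < m \<Longrightarrow> om j ^ m = 1"
  using bij_betwE[OF om_bij] by auto

lemma om_inj: "i < m \<Longrightarrow> j < m \<Longrightarrow> om i = om j \<Longrightarrow> i = j"
  using bij_betw_imp_inj_on[OF om_bij] by (auto dest: inj_onD)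

lemma om_surj: "z ^ m = 1 \<Longrightarrow> \<exists>j<m. om j = z"
  using bij_betw_imp_surj_on[OF om_bij] by (metis (mono_tags, lifting) imageE lessThan_iff mem_Collect_eq)

lemma om_norm: "norm (om j) = 1" by (simp add: om_def)
lemma om_nz: "om j \<noteq> 0" using om_norm[of j] by auto
lemma om_0: "om 0 = 1" by (simp add: om_def)

lemma om_power: "om j ^ k = om k ^ j"
  by (simp add: om_def DeMoivre algebra_simps)

lemma geo: "(r::complex) ^ m = 1 \<Longrightarrow> (\<Sum>i<m. r ^ i) = (if r = 1 then of_nat m else 0)"
  by (simp add: geometric_sum)

definition Ej :: "nat \<Rightarrow> 'v \<Rightarrow> 'v" where
  "Ej j u = sc (1 / of_nat m) (\<Sum>k<m. sc (inverse (om j) ^ k) ((P ^^ k) u))"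

lemma mhEj: "module_hom sc sc (Ej j)"
  unfolding module_hom_iff
proof (intro conjI allI)
  show "module sc" by (rule mod_self)
  show "module sc" by (rule mod_self)
  fix x y :: 'v and a :: complex
  show "Ej j (x + y) = Ej j x + Ej j y"
    by (simp add: Ej_def module_hom.add[OF mhPk] scale_right_distrib sum.distrib)
  show "Ej j (sc a x) = sc a (Ej j x)"
    by (simp add: Ej_def Pk_scale scale_sum_right mult.commute)
qed

lemma Ej_ev: "j < m \<Longrightarrow> ev (om j) (Ej j u)"
proof -
  assume j: "j < m"
  define a where "a = inverse (om j)"
  define f where "f k = sc (a ^ k) ((P ^^ k) u)" for k
  have am: "a ^ m = 1" using om_root[OF j] by (simp add: a_def power_inverse)
  have aom: "a * om j = 1" using om_nz[of j] by (simp add: a_def)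
  have fm: "f m = f 0" using am Pm by (simp add: f_def)
  have step: "P (f k) = sc (om j) (f (Suc k))" for k
  proof -
    have "P (f k) = sc (a ^ k) ((P ^^ Suc k) u)" by (simp add: f_def P_scale)
    also have "a ^ k = om j * a ^ Suc k" using aom by (simp add: algebra_simps)
    finally show ?thesis by (simp add: f_def)
  qed
  have "(\<Sum>k<m. f (Suc k)) = (\<Sum>k<m. f k)"
  proof -
    have "(\<Sum>k<Suc m. f k) = f 0 + (\<Sum>k<m. f (Suc k))" by (rule sum.lessThan_Suc_shift)
    moreover have "(\<Sum>k<Suc m. f k) = (\<Sum>k<m. f k) + f m" by simp
    ultimately show ?thesis using fm by (simp add: add.commute)
  qed
  have "P (\<Sum>k<m. f k) = (\<Sum>k<m. sc (om j) (f (Suc k)))" by (simp add: P_sum step)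
  also have "\<dots> = sc (om j) (\<Sum>k<m. f (Suc k))" by (simp add: scale_sum_right)
  also have "\<dots> = sc (om j) (\<Sum>k<m. f k)" using \<open>(\<Sum>k<m. f (Suc k)) = (\<Sum>k<m. f k)\<close> by simp
  finally have "P (\<Sum>k<m. f k) = sc (om j) (\<Sum>k<m. f k)" .
  thus ?thesis unfolding ev_def Ej_def f_def[symmetric] a_def[symmetric]
    by (simp add: P_scale)
qed

lemma Ej_sum: "(\<Sum>j<m. Ej j u) = u"
proof -
  have coef: "(\<Sum>j<m. inverse (om j) ^ k) = (if k = 0 then of_nat m else 0)" if k: "k < m" for k
  proof -
    have "(\<Sum>j<m. inverse (om j) ^ k) = (\<Sum>j<m. inverse (om k) ^ j)"
      by (simp add: power_inverse om_power)
    also have "\<dots> = (if inverse (om k) = 1 then of_nat m else 0)"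
      using om_root[OF k] by (intro geo) (simp add: power_inverse)
    also have "(inverse (om k) = 1) = (k = 0)"
      using om_inj[OF k, of 0] m_pos om_0 by (auto simp: inverse_eq_1_iff)
    finally show ?thesis .
  qed
  have "(\<Sum>j<m. Ej j u) = sc (1 / of_nat m) (\<Sum>j<m. \<Sum>k<m. sc (inverse (om j) ^ k) ((P ^^ k) u))"
    by (simp add: Ej_def scale_sum_right)
  also have "(\<Sum>j<m. \<Sum>k<m. sc (inverse (om j) ^ k) ((P ^^ k) u)) =
      (\<Sum>k<m. sc (\<Sum>j<m. inverse (om j) ^ k) ((P ^^ k) u))"
    by (subst sum.swap) (simp add: scale_sum_left)
  also have "\<dots> = (\<Sum>k<m. if k = 0 then sc (of_nat m) u else 0)"
    by (rule sum.cong) (simp_all add: coef)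
  also have "\<dots> = sc (of_nat m) u" using m_pos by (simp add: sum.delta)
  finally show ?thesis using m_pos by simp
qed

lemma Ej_eval: "j < m \<Longrightarrow> ev \<mu> q \<Longrightarrow> Ej j q = (if \<mu> = om j then q else 0)"
proof -
  assume j: "j < m" and e: "ev \<mu> q"
  show ?thesis
  proof (cases "q = 0")
    case True then show ?thesis by (simp add: Ej_def module_hom.zero[OF mhPk])
  next
    case False
    have mu: "\<mu> ^ m = 1" by (rule ev_root[OF e False])
    define r where "r = inverse (om j) * \<mu>"
    have rm: "r ^ m = 1" using om_root[OF j] mu by (simp add: r_def power_mult_distrib power_inverse)
    have r1: "(r = 1) = (\<mu> = om j)" using om_nz[of j] by (auto simp: r_def field_simps)
    have "Ej j q = sc (1 / of_nat m) (\<Sum>k<m. sc (r ^ k) q)"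
      by (simp add: Ej_def ev_pow[OF e] r_def power_mult_distrib)
    also have "\<dots> = sc (1 / of_nat m) (sc (\<Sum>k<m. r ^ k) q)" by (simp add: scale_sum_left)
    also have "\<dots> = (if \<mu> = om j then q else 0)" using geo[OF rm] r1 m_pos by auto
    finally show ?thesis .
  qed
qed

lemma Ej_stable:
  assumes S: "subspace S" and PS: "\<And>u. u \<in> S \<Longrightarrow> P u \<in> S" and u: "u \<in> S"
  shows "Ej j u \<in> S"
proof -
  have "(P ^^ k) u \<in> S" for k by (induction k) (simp_all add: u PS)
  thus ?thesis unfolding Ej_def
    by (intro subspace_scale[OF S] subspace_sum[OF S]) simp
qed

lemma eig_exists:
  assumes S: "subspace S" "S \<noteq> UNIV"
  obtains j u where "j < m" "Ej j u \<notin> S"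
proof -
  from S obtain u where u: "u \<notin> S" by blast
  have "\<exists>j<m. Ej j u \<notin> S"
  proof (rule ccontr)
    assume "\<not> ?thesis"
    hence "(\<Sum>j<m. Ej j u) \<in> S" by (intro subspace_sum[OF S(1)]) auto
    thus False using u Ej_sum by simp
  qed
  thus ?thesis using that by blast
qed

lemma lemA: assumes z: "ev \<alpha> z" shows "br z (br z (br z (br z u))) = 0"
proof (cases "z = 0")
  case True then show ?thesis by simp
next
  case False
  have na: "norm \<alpha> = 1" by (rule ev_norm[OF z False])
  let ?T = "\<lambda>p. br z (br z (br z (br z p)))"
  have each: "?T (Ej j u) = 0" if j: "j < m" for j
  proof (rule ccontr)
    define p where "p = Ej j u"
    assume ne: "?T (Ej j u) \<noteq> 0"
    have ep: "ev (om j) p" using Ej_ev[OF j] p_def by simp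
    have eq: "ev (\<alpha> + \<alpha> + om j) (br z (br z p))" by (rule ev_br3[OF z z ep])
    have er: "ev (\<alpha> + \<alpha> + (\<alpha> + \<alpha> + om j)) (br z (br z (br z (br z p))))" by (rule ev_br3[OF z z eq])
    have r0: "br z (br z (br z (br z p))) \<noteq> 0" using ne p_def by simp
    hence q0: "br z (br z p) \<noteq> 0" by auto
    hence p0: "p \<noteq> 0" by auto
    have "norm (om j) = 1" by (rule om_norm)
    moreover have "norm (om j + 2 * \<alpha>) = 1" using ev_norm[OF eq q0] by (simp add: algebra_simps)
    moreover have "norm (om j + 2 * (2 * \<alpha>)) = 1" using ev_norm[OF er r0] by (simp add: algebra_simps)
    ultimately have "2 * \<alpha> = 0" by (rule AP_lemma)
    thus False using na by simp
  qed
  have "?T u = ?T (\<Sum>j<m. Ej j u)" by (simp add: Ej_sum)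
  also have "\<dots> = (\<Sum>j<m. ?T (Ej j u))" by (simp add: br_sum_r)
  also have "\<dots> = 0" using each by simp
  finally show ?thesis .
qed

lemma lemB:
  assumes a: "ev \<alpha> x" and b: "ev \<beta> y" and ab: "\<alpha> + \<beta> \<noteq> 0"
  shows "br y (br x (br x (br y x))) = 0"
proof (rule ccontr)
  assume r0: "br y (br x (br x (br y x))) \<noteq> 0"
  have eq: "ev (\<alpha> + \<beta> + \<alpha>) (br x (br y x))" by (rule ev_br3[OF a b a])
  have er: "ev (\<beta> + \<alpha> + (\<alpha> + \<beta> + \<alpha>)) (br y (br x (br x (br y x))))" by (rule ev_br3[OF b a eq])
  have q0: "br x (br y x) \<noteq> 0" using r0 by auto
  have x0: "x \<noteq> 0" using q0 by auto
  have "norm \<alpha> = 1" by (rule ev_norm[OF a x0])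
  moreover have "norm (\<alpha> + (\<alpha> + \<beta>)) = 1" using ev_norm[OF eq q0] by (simp add: algebra_simps)
  moreover have "norm (\<alpha> + 2 * (\<alpha> + \<beta>)) = 1" using ev_norm[OF er r0] by (simp add: algebra_simps)
  ultimately have "\<alpha> + \<beta> = 0" by (rule AP_lemma)
  thus False using ab by simp
qed


lemma P_add: "P (a + b) = P a + P b" by (rule module_hom.add[OF mhP])

lemma P_L2: "u \<in> L 2 \<Longrightarrow> P u \<in> L 2"
proof -
  assume u: "u \<in> L 2"
  let ?S = "{b. \<forall>a. P (br a b) \<in> L 2}"
  have subS: "subspace ?S"
  proof (rule subspaceI)
    show "0 \<in> ?S" using subspace_0[OF L_sub] by (simp add: module_hom.zero[OF mhP])
    show "x + y \<in> ?S" if "x \<in> ?S" "y \<in> ?S" for x y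
      using that by (auto simp: br_add_r P_add intro!: subspace_add[OF L_sub])
    show "sc a x \<in> ?S" if "x \<in> ?S" for a x
      using that by (auto simp: br_scale_r P_scale intro!: subspace_scale[OF L_sub])
  qed
  have genS: "b \<in> ?S" if "b \<in> {br p q | p q. q \<in> L 0}" for b
  proof -
    from that obtain p q where b: "b = br p q" by blast
    have L1: "br s t \<in> L 1" for s t using br_L[of t 0 s] by (simp add: L_0)
    have L2: "br r (br s t) \<in> L 2" for r s t using br_L[OF L1[of s t], of r] by (simp add: numeral_2_eq_2)
    show ?thesis unfolding b using L2
      by (simp add: pre subspace_add[OF L_sub])
  qed
  have L1S: "L 1 \<subseteq> ?S"
  proof
    fix b assume "b \<in> L 1"
    hence "b \<in> span {br p q | p q. q \<in> L 0}" by (simp add: L_Suc[of 0, symmetric])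
    thus "b \<in> ?S" by (rule span_subspace_induct[OF _ subS genS])
  qed
  let ?T = "{u. P u \<in> L 2}"
  have subT: "subspace ?T"
  proof (rule subspaceI)
    show "0 \<in> ?T" using subspace_0[OF L_sub] by (simp add: module_hom.zero[OF mhP])
    show "x + y \<in> ?T" if "x \<in> ?T" "y \<in> ?T" for x y
      using that by (auto simp: P_add intro!: subspace_add[OF L_sub])
    show "sc a x \<in> ?T" if "x \<in> ?T" for a x
      using that by (auto simp: P_scale intro!: subspace_scale[OF L_sub])
  qed
  have genT: "x \<in> ?T" if "x \<in> {br a b | a b. b \<in> L 1}" for x
    using that L1S by blast
  have "u \<in> L (Suc 1)" using u by (simp add: numeral_2_eq_2)
  hence "u \<in> span {br a b | a b. b \<in> L 1}" unfolding L_Suc[of 1] .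
  hence "u \<in> ?T" by (rule span_subspace_induct[OF _ subT genT])
  thus ?thesis by simp
qed

lemma notN2_N3:
  assumes z: "ev \<gamma> z" and z2: "z \<notin> Nk 2"
  shows "z \<in> Nk 3"
proof (rule ccontr)
  assume z3: "z \<notin> Nk 3"
  have z1: "z \<notin> Nk 1" using z2 N1_N2 by auto
  have zL: "z \<notin> L 1" using z1 L1_Nk by auto
  obtain y0 where y0: "y0 \<notin> span (insert z (L 1))" using not_full[of z] by blast
  have full: "span (insert y0 (insert z (L 1))) = UNIV" by (rule two_dim[OF zL y0])
  define w where "w = br z y0"
  have w2: "w \<notin> L 2" using two_br[OF full] w_def by simp
  have w1: "w \<in> L 1" using br_L[of y0 0 z] w_def by (simp add: L_0)
  define q1 where "q1 = br z w"
  have q1n: "q1 \<notin> L 3" using nonN[of 1 z w] c5 z1 w1 w2 q1_def by (simp add: eval_nat_numeral)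
  have q1L: "q1 \<in> L 2" using br_L[OF w1] q1_def by (simp add: numeral_2_eq_2)
  define q2 where "q2 = br z q1"
  have q2n: "q2 \<notin> L 4" using nonN[of 2 z q1] c5 z2 q1L q1n q2_def by (simp add: eval_nat_numeral)
  have q2L: "q2 \<in> L 3" using br_L[OF q1L] q2_def by (simp add: eval_nat_numeral)
  define q3 where "q3 = br z q2"
  have q3n: "q3 \<notin> L 5" using nonN[of 3 z q2] c5 z3 q2L q2n q3_def by (simp add: eval_nat_numeral)
  have "q3 = 0" using lemA[OF z, of y0] q3_def q2_def q1_def w_def by simp
  thus False using q3n subspace_0[OF L_sub] by simp
qed

lemma pair_indep:
  assumes a: "a \<notin> Nk 2" and b2: "b \<in> Nk 2" and b3: "b \<notin> Nk 3"
  shows "span (insert b (insert a (L 1))) = UNIV"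
proof -
  have aL: "a \<notin> L 1" using a L1_Nk by auto
  have bL: "b \<notin> L 1" using b3 L1_Nk by auto
  have "b \<notin> span (insert a (L 1))"
  proof
    assume "b \<in> span (insert a (L 1))"
    then obtain t where t: "b - sc t a \<in> L 1" using span_breakdown_eq[of b a "L 1"] by auto
    have t0: "t \<noteq> 0" using t bL by auto
    have bt: "b - sc t a \<in> Nk 2" using t L1_Nk by auto
    have "b - (b - sc t a) \<in> Nk 2" by (rule subspace_diff[OF Nk_sub b2 bt])
    hence "sc t a \<in> Nk 2" by simp
    hence "sc (inverse t) (sc t a) \<in> Nk 2" by (rule subspace_scale[OF Nk_sub])
    hence "a \<in> Nk 2" using t0 by simp
    thus False using a by simp
  qed
  thus ?thesis by (rule two_dim[OF aL])
qed

lemma pair_chain: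
  assumes a: "a \<notin> Nk 2" and b2: "b \<in> Nk 2" and b3: "b \<notin> Nk 3"
  shows "br a b \<in> L 1" "br a b \<notin> L 2" "br a (br a b) \<in> L 2" "br a (br a b) \<notin> L 3"
    "br a (br a (br a b)) \<in> L 3" "br a (br a (br a b)) \<notin> L 4"
    "br b (br a (br a (br a b))) \<notin> L 5"
proof -
  have a1: "a \<notin> Nk 1" using a N1_N2 by auto
  show w1: "br a b \<in> L 1" using br_L[of b 0 a] by (simp add: L_0)
  show w2: "br a b \<notin> L 2" using two_br[OF pair_indep[OF a b2 b3]] .
  show v2: "br a (br a b) \<in> L 2" using br_L[OF w1] by (simp add: numeral_2_eq_2)
  show v3: "br a (br a b) \<notin> L 3" using nonN[of 1 a "br a b"] c5 a1 w1 w2 by (simp add: eval_nat_numeral)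
  show u3: "br a (br a (br a b)) \<in> L 3" using br_L[OF v2] by (simp add: eval_nat_numeral)
  show u4: "br a (br a (br a b)) \<notin> L 4" using nonN[of 2 a "br a (br a b)"] c5 a v2 v3 by (simp add: eval_nat_numeral)
  show "br b (br a (br a (br a b))) \<notin> L 5" using nonN[of 3 b "br a (br a (br a b))"] c5 b3 u3 u4
    by (simp add: eval_nat_numeral)
qed

lemma pair_sum:
  assumes ea: "ev \<alpha> a" and eb: "ev \<beta> b" and a: "a \<notin> Nk 2" and b2: "b \<in> Nk 2" and b3: "b \<notin> Nk 3"
  shows "\<alpha> + \<beta> = 0"
proof (rule ccontr)
  assume ab: "\<alpha> + \<beta> \<noteq> 0"
  have "br b (br a (br a (br b a))) = 0" by (rule lemB[OF ea eb ab])
  hence "br b (br a (br a (br a b))) = 0"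
    by (simp add: antisym[of a b] br_neg_r)
  thus False using pair_chain(7)[OF a b2 b3] subspace_0[OF L_sub] by simp
qed

lemma N23_L1:
  assumes x2: "x \<notin> Nk 2" and x3: "x \<in> Nk 3" and z2: "z \<in> Nk 2" and z3: "z \<in> Nk 3"
  shows "z \<in> L 1"
proof (rule ccontr)
  assume zL: "z \<notin> L 1"
  have xL: "x \<notin> L 1" using x2 L1_Nk by auto
  have "z \<notin> span (insert x (L 1))"
  proof
    assume "z \<in> span (insert x (L 1))"
    then obtain t where t: "z - sc t x \<in> L 1" using span_breakdown_eq[of z x "L 1"] by auto
    have t0: "t \<noteq> 0" using t zL by auto
    have zt: "z - sc t x \<in> Nk 2" using t L1_Nk by auto
    have "z - (z - sc t x) \<in> Nk 2" by (rule subspace_diff[OF Nk_sub z2 zt])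
    hence "sc t x \<in> Nk 2" by simp
    hence "sc (inverse t) (sc t x) \<in> Nk 2" by (rule subspace_scale[OF Nk_sub])
    hence "x \<in> Nk 2" using t0 by simp
    thus False using x2 by simp
  qed
  hence full: "span (insert z (insert x (L 1))) = UNIV" by (rule two_dim[OF xL])
  have "span (insert z (insert x (L 1))) \<subseteq> Nk 3"
    using z3 x3 L1_Nk by (intro span_minimal Nk_sub) auto
  thus False using full Nk_proper[of 3] c5 by auto
qed

theorem main_false: False
proof -
  obtain j0 u0 where j0: "j0 < m" and xn: "Ej j0 u0 \<notin> Nk 2"
    using eig_exists[OF Nk_sub Nk_proper[of 2]] c5 by auto
  define x where "x = Ej j0 u0"
  define \<alpha> where "\<alpha> = om j0"
  have ex: "ev \<alpha> x" using Ej_ev[OF j0] x_def \<alpha>_def by simp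
  have x2: "x \<notin> Nk 2" using xn x_def by simp
  have x3: "x \<in> Nk 3" by (rule notN2_N3[OF ex x2])
  obtain j1 u1 where j1: "j1 < m" and yn: "Ej j1 u1 \<notin> Nk 3"
    using eig_exists[OF Nk_sub Nk_proper[of 3]] c5 by auto
  define y where "y = Ej j1 u1"
  define \<beta> where "\<beta> = om j1"
  have ey: "ev \<beta> y" using Ej_ev[OF j1] y_def \<beta>_def by simp
  have y3: "y \<notin> Nk 3" using yn y_def by simp
  have y2: "y \<in> Nk 2" using notN2_N3[OF ey] y3 by blast
  have ab: "\<alpha> + \<beta> = 0" by (rule pair_sum[OF ex ey x2 y2 y3])
  hence b: "\<beta> = - \<alpha>" by (simp add: eq_neg_iff_add_eq_0 add.commute)
  have a0: "\<alpha> \<noteq> 0" using om_nz \<alpha>_def by simp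
  define w where "w = br x y"
  define v where "v = br x w"
  have w1: "w \<in> L 1" and w2: "w \<notin> L 2" and v2: "v \<in> L 2"
    and xv3: "br x v \<in> L 3" and xv4: "br x v \<notin> L 4" and yxv: "br y (br x v) \<notin> L 5"
    using pair_chain[OF x2 y2 y3] w_def v_def by simp_all
  have ev: "ev (\<alpha> + \<alpha> + \<beta>) v" using ev_br3[OF ex ex ey] v_def w_def by simp
  have yv: "br y v \<in> L 4" using y2 v2 unfolding Nk_def by (simp add: eval_nat_numeral)
  have xyv: "br x (br y v) \<in> L 5" using br_L[OF yv] by (simp add: eval_nat_numeral)
  have jw: "br w v = br x (br y v) - br y (br x v)" by (simp add: w_def jac2)
  have wv: "br w v \<notin> L 5"
  proof
    assume h: "br w v \<in> L 5"
    have "br x (br y v) - br w v \<in> L 5" by (rule subspace_diff[OF L_sub xyv h])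
    hence "br y (br x v) \<in> L 5" using jw by (simp add: algebra_simps)
    thus False using yxv by simp
  qed
  have evwv: "ev \<alpha> (br w v)"
  proof -
    have e1: "ev (\<alpha> + \<beta> + (\<alpha> + \<alpha> + \<beta>)) (br x (br y v))" by (rule ev_br3[OF ex ey ev])
    have e2: "ev (\<beta> + \<alpha> + (\<alpha> + \<alpha> + \<beta>)) (br y (br x v))" by (rule ev_br3[OF ey ex ev])
    have "\<alpha> + \<beta> + (\<alpha> + \<alpha> + \<beta>) = \<alpha>" "\<beta> + \<alpha> + (\<alpha> + \<alpha> + \<beta>) = \<alpha>" using b by simp_all
    thus ?thesis using ev_diff[OF _ _] e1 e2 jw by metis
  qed
  have E0: "Ej j0 (br w v) = br w v" using Ej_eval[OF j0 evwv] \<alpha>_def by simp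
  define W where "W i = Ej i w" for i
  have eW: "ev (om i) (W i)" if "i < m" for i using Ej_ev[OF that] W_def by simp
  have wsum: "(\<Sum>i<m. W i) = w" using Ej_sum W_def by simp
  have cN2: "W i \<in> Nk 2" if i: "i < m" "om i \<noteq> \<alpha>" for i
  proof (rule ccontr)
    assume "W i \<notin> Nk 2"
    hence "om i + \<beta> = 0" by (rule pair_sum[OF eW[OF i(1)] ey _ y2 y3])
    thus False using i b by (simp add: eq_neg_iff_add_eq_0[symmetric])
  qed
  have cN3: "W i \<in> Nk 3" if i: "i < m" "om i \<noteq> - \<alpha>" for i
  proof (rule ccontr)
    assume n3: "W i \<notin> Nk 3"
    have "W i \<in> Nk 2" using notN2_N3[OF eW[OF i(1)]] n3 by blast
    hence "\<alpha> + om i = 0" by (rule pair_sum[OF ex eW[OF i(1)] x2 _ n3])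
    thus False using i by (simp add: add_eq_0_iff)
  qed
  have rest: "W i = w - (\<Sum>i'\<in>{..<m} - {i}. W i')" if "i < m" for i
    using sum.remove[of "{..<m}" i W] that wsum by (simp add: algebra_simps)
  have WN2: "W i \<in> Nk 2" if i: "i < m" for i
  proof (cases "om i = \<alpha>")
    case False then show ?thesis using cN2 i by simp
  next
    case True
    have "(\<Sum>i'\<in>{..<m} - {i}. W i') \<in> Nk 2"
    proof (rule subspace_sum[OF Nk_sub])
      fix i' assume "i' \<in> {..<m} - {i}"
      hence i': "i' < m" "i' \<noteq> i" by auto
      have "om i' \<noteq> \<alpha>" using om_inj[OF i'(1) i] i'(2) True by auto
      thus "W i' \<in> Nk 2" using cN2 i' by simp
    qed
    moreover have "w \<in> Nk 2" using w1 L1_Nk by auto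
    ultimately show ?thesis using rest[OF i] subspace_diff[OF Nk_sub] by simp
  qed
  have WN3: "W i \<in> Nk 3" if i: "i < m" for i
  proof (cases "om i = - \<alpha>")
    case False then show ?thesis using cN3 i by simp
  next
    case True
    have "(\<Sum>i'\<in>{..<m} - {i}. W i') \<in> Nk 3"
    proof (rule subspace_sum[OF Nk_sub])
      fix i' assume "i' \<in> {..<m} - {i}"
      hence i': "i' < m" "i' \<noteq> i" by auto
      have "om i' \<noteq> - \<alpha>" using om_inj[OF i'(1) i] i'(2) True by auto
      thus "W i' \<in> Nk 3" using cN3 i' by simp
    qed
    moreover have "w \<in> Nk 3" using w1 L1_Nk by auto
    ultimately show ?thesis using rest[OF i] subspace_diff[OF Nk_sub] by simp
  qed
  have WL1: "W i \<in> L 1" if "i < m" for i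
    by (rule N23_L1[OF x2 x3 WN2[OF that] WN3[OF that]])
  have uniq: "i = i'" if i: "i < m" "i' < m" "W i \<notin> L 2" "W i' \<notin> L 2" for i i'
  proof (rule ccontr)
    assume ne: "i \<noteq> i'"
    obtain t where t: "W i' - sc t (W i) \<in> L 2"
      using one_dimE[of 1 "W i" "W i'"] c5 WL1 i by (auto simp: numeral_2_eq_2)
    have "Ej i' (W i' - sc t (W i)) \<in> L 2"
      by (rule Ej_stable[OF L_sub P_L2 t])
    moreover have "Ej i' (W i' - sc t (W i)) = Ej i' (W i') - sc t (Ej i' (W i))"
      by (simp add: module_hom.diff[OF mhEj] module_hom.scale[OF mhEj])
    moreover have "Ej i' (W i') = W i'" using Ej_eval[OF i(2) eW[OF i(2)]] by simp
    moreover have "Ej i' (W i) = 0" using Ej_eval[OF i(2) eW[OF i(1)]] om_inj[OF i(1) i(2)] ne by auto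
    ultimately show False using i(4) by simp
  qed
  have expand: "br w v = (\<Sum>i<m. \<Sum>i'<m. br (W i) (br x (W i')))"
  proof -
    have "br w v = br (\<Sum>i<m. W i) (br x (\<Sum>i'<m. W i'))" using wsum v_def by simp
    also have "\<dots> = (\<Sum>i<m. \<Sum>i'<m. br (W i) (br x (W i')))"
      by (simp add: br_sum_l br_sum_r, rule sum.swap)
    finally show ?thesis .
  qed
  have term5: "Ej j0 (br (W i) (br x (W i'))) \<in> L 5" if i: "i < m" "i' < m" for i i'
  proof -
    have et: "ev (om i + \<alpha> + om i') (br (W i) (br x (W i')))" by (rule ev_br3[OF eW[OF i(1)] ex eW[OF i(2)]])
    show ?thesis
    proof (cases "om i + \<alpha> + om i' = \<alpha>")
      case False
      then show ?thesis using Ej_eval[OF j0 et] \<alpha>_def subspace_0[OF L_sub] by simp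
    next
      case True
      have val: "Ej j0 (br (W i) (br x (W i'))) = br (W i) (br x (W i'))"
        using Ej_eval[OF j0 et] \<alpha>_def True by simp
      have s0: "om i + om i' = 0" using True by (simp add: algebra_simps)
      show ?thesis unfolding val
      proof (cases "W i \<in> L 2")
        case True
        have "br x (W i') \<in> L 2" using br_L[OF WL1[OF i(2)]] by (simp add: numeral_2_eq_2)
        from L_bracket[OF True this] show "br (W i) (br x (W i')) \<in> L 5" by simp
      next
        case F1: False
        show "br (W i) (br x (W i')) \<in> L 5"
        proof (cases "W i' \<in> L 2")
          case True
          have "br x (W i') \<in> L 3" using br_L[OF True] by (simp add: eval_nat_numeral)
          from L_bracket[OF WL1[OF i(1)] this] show ?thesis by simp
        next
          case False
          have "i = i'" by (rule uniq[OF i F1 False])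
          hence "om i + om i = 0" using s0 by simp
          hence "om i = 0" by simp
          thus ?thesis using om_nz by simp
        qed
      qed
    qed
  qed
  have "br w v = Ej j0 (br w v)" using E0 by simp
  also have "\<dots> = (\<Sum>i<m. \<Sum>i'<m. Ej j0 (br (W i) (br x (W i'))))"
    unfolding expand by (simp add: module_hom.sum[OF mhEj])
  finally have "br w v = (\<Sum>i<m. \<Sum>i'<m. Ej j0 (br (W i) (br x (W i'))))" .
  moreover have "(\<Sum>i<m. \<Sum>i'<m. Ej j0 (br (W i) (br x (W i')))) \<in> L 5"
    by (intro subspace_sum[OF L_sub]) (simp add: term5)
  ultimately show False using wv by simp
qed
end


theorem corollary5p12:
  fixes sc :: "complex \<Rightarrow> 'v::ab_group_add \<Rightarrow> 'v"
    and br :: "'v \<Rightarrow> 'v \<Rightarrow> 'v"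
    and c :: nat
  assumes "complex_lie_algebra sc br"
    and "finite_dim sc"
    and "filiform sc br"
    and "nilpotency_class sc br c"
    and "c \<ge> 5"
  shows "\<not> (\<exists>P. prederivation sc br P \<and> periodic P)"
proof
  assume "\<exists>P. prederivation sc br P \<and> periodic P"
  then obtain P m where pd: "prederivation sc br P" and m: "1 \<le> m" and Pm: "P ^^ m = id"
    unfolding periodic_def by blast
  have vs: "vector_space sc" and l1: "\<And>x. Vector_Spaces.linear sc sc (br x)"
    and l2: "\<And>y. Vector_Spaces.linear sc sc (\<lambda>x. br x y)" and al: "\<And>x. br x x = 0"
    and ja: "\<And>x y z. br x (br y z) + br y (br z x) + br z (br x y) = 0"
    using assms(1) unfolding complex_lie_algebra_def by auto
  have lA: "lieA sc br" by (intro lieA.intro vs lieA_axioms.intro l1 l2 al ja)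
  obtain B where fB: "finite B" and sB: "module.span sc B = UNIV"
    using assms(2) unfolding finite_dim_def by blast
  obtain Bas where ind: "\<not> module.dependent sc Bas" and spB: "UNIV \<subseteq> module.span sc Bas"
    using vector_space.basis_exists[OF vs, of UNIV] by blast
  have finBas: "finite Bas" using vector_space.independent_span_bound[OF vs fB ind] sB by simp
  have fdv: "finite_dimensional_vector_space sc Bas"
    by (intro finite_dimensional_vector_space.intro vs finite_dimensional_vector_space_axioms.intro finBas ind)
      (use spB in blast)
  have cdim: "c = vector_space.dim sc UNIV - 1"
    using lieA.class_unique[OF lA assms(4)] assms(3) unfolding filiform_def by blast
  have lF: "lieF sc br Bas c"
    by (intro lieF.intro lA fdv lieF_axioms.intro assms(4) assms(5) cdim)
  have pl: "Vector_Spaces.linear sc sc P" using pd unfolding prederivation_def by blast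
  have pp: "\<And>x y z. P (br x (br y z)) = br (P x) (br y z) + br x (br (P y) z) + br x (br y (P z))"
    using pd unfolding prederivation_def by blast
  have lP: "lieP sc br Bas c P m"
    by (intro lieP.intro lF lieP_axioms.intro pl pp m Pm)
  show False by (rule lieP.main_false[OF lP])
qed

end
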